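(* In the three-door Monty Hall game described in the context, let $Q$ be an arbitrary mixed strategy of Monte, with $\pi_\theta=Q(\{(\theta,d):d\neq\theta\})$ for $\theta\in\{1,2,3\}$, and let $u$ be a door with $\pi_u=\min(\pi_1,\pi_2,\pi_3)$. Then the always-switching pure strategy $u\,\mathrm{s}\,\mathrm{s}$ is Bayesian for $Q$, and its winning probability against $Q$ equals $1-\min(\pi_1,\pi_2,\pi_3)$.
   Context: Doors are numbered $1,2,3$. A pure strategy of Monte is a pair $(\theta,d)$ with $\theta\in\{1,2,3\}$ (the door hiding the prize) and $d\in\{1,2,3\}\setminus\{\theta\}$ (six strategies). A pure strategy of Conie is a triple $x\,a\,b$ with $x\in\{1,2,3\}$ and $a,b\in\{\mathrm{h},\mathrm{s}\}$ (twelve strategies). Under the profile $((\theta,d),x\,a\,b)$: Monte offers door $y=\theta$ if $x\neq\theta$ and $y=d$ if $x=\theta$; Conie's action is $a$ if $y$ is the smaller of the two doors in $\{1,2,3\}\setminus\{x\}$ and $b$ otherwise; her final choice is $z=x$ for action $\mathrm{h}$ and $z=y$ for action $\mathrm{s}$; she wins (payoff 1) iff $z=\theta$, else payoff 0. A mixed strategy is a probability distribution on pure strategies. For a mixed strategy $Q$ of Monte, a strategy of Conie is Bayesian if it maximizes Conie's winning probability against $Q$ (strategies played independently) among all mixed strategies of Conie. *)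

theory Defs
  imports Main "HOL-Analysis.Analysis"
begin

datatype act = Hold | Switch

type_synonym monte = "nat \<times> nat"
type_synonym conie = "nat \<times> act \<times> act"

definition doors :: "nat set" where "doors = {1,2,3}"

definition MonteS :: "monte set" where
  "MonteS = {(\<theta>, d). \<theta> \<in> doors \<and> d \<in> doors \<and> d \<noteq> \<theta>}"

definition ConieS :: "conie set" where
  "ConieS = {(x, a, b). x \<in> doors}"

definition offer :: "monte \<Rightarrow> conie \<Rightarrow> nat" where
  "offer m c = (case m of (\<theta>, d) \<Rightarrow> case c of (x, a, b) \<Rightarrow> if x \<noteq> \<theta> then \<theta> else d)"

definition action :: "monte \<Rightarrow> conie \<Rightarrow> act" where
  "action m c = (case c of (x, a, b) \<Rightarrow>
     if offer m c = Min (doors - {x}) then a else b)"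

definition final :: "monte \<Rightarrow> conie \<Rightarrow> nat" where
  "final m c = (case c of (x, a, b) \<Rightarrow>
     (case action m c of Hold \<Rightarrow> x | Switch \<Rightarrow> offer m c))"

definition payoff :: "monte \<Rightarrow> conie \<Rightarrow> real" where
  "payoff m c = (if final m c = fst m then 1 else 0)"

definition mixed :: "'a set \<Rightarrow> ('a \<Rightarrow> real) \<Rightarrow> bool" where
  "mixed S p \<longleftrightarrow> (\<forall>s\<in>S. 0 \<le> p s) \<and> (\<Sum>s\<in>S. p s) = 1"

definition winprob :: "(monte \<Rightarrow> real) \<Rightarrow> (conie \<Rightarrow> real) \<Rightarrow> real" where
  "winprob Q P = (\<Sum>m\<in>MonteS. \<Sum>c\<in>ConieS. Q m * P c * payoff m c)"

definition point :: "conie \<Rightarrow> conie \<Rightarrow> real" where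
  "point c = (\<lambda>c'. if c' = c then 1 else 0)"

definition bayesian :: "(monte \<Rightarrow> real) \<Rightarrow> (conie \<Rightarrow> real) \<Rightarrow> bool" where
  "bayesian Q P \<longleftrightarrow> mixed ConieS P \<and>
     (\<forall>P'. mixed ConieS P' \<longrightarrow> winprob Q P' \<le> winprob Q P)"

definition prior :: "(monte \<Rightarrow> real) \<Rightarrow> nat \<Rightarrow> real" where
  "prior Q \<theta> = (\<Sum>m\<in>{m\<in>MonteS. fst m = \<theta>}. Q m)"

end

theory Submission
  imports Defs
begin

lemma MonteS_eq: "MonteS = {(1,2),(1,3),(2,1),(2,3),(3,1),(3,2)}"
  unfolding MonteS_def doors_def by auto

lemma act_cases: "(a::act) = Hold \<or> a = Switch" by (cases a) auto

lemma ConieS_eq: "ConieS = {1,2,3} \<times> {Hold,Switch} \<times> {Hold,Switch}"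
proof -
  have U: "(UNIV::act set) = {Hold, Switch}" using act_cases by auto
  have "ConieS = doors \<times> (UNIV::act set) \<times> (UNIV::act set)" unfolding ConieS_def by auto
  then show ?thesis unfolding U doors_def by simp
qed

lemma finC: "finite ConieS" unfolding ConieS_eq by simp

definition W :: "(monte \<Rightarrow> real) \<Rightarrow> conie \<Rightarrow> real" where
  "W Q c = (\<Sum>m\<in>MonteS. Q m * payoff m c)"

lemma winprob_W: "winprob Q P = (\<Sum>c\<in>ConieS. P c * W Q c)"
  unfolding winprob_def W_def
  by (subst sum.swap) (simp add: sum_distrib_left mult_ac)

lemma Wval: "W Q c = (\<Sum>m\<in>{(1,2),(1,3),(2,1),(2,3),(3,1),(3,2)}. Q m * payoff m c)"
  unfolding W_def MonteS_eq ..

lemma priors: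
  "prior Q 1 = Q (1,2) + Q (1,3)" "prior Q 2 = Q (2,1) + Q (2,3)" "prior Q 3 = Q (3,1) + Q (3,2)"
proof -
  have "{m\<in>MonteS. fst m = 1} = {(1,2),(1,3)}" "{m\<in>MonteS. fst m = 2} = {(2,1),(2,3)}"
       "{m\<in>MonteS. fst m = 3} = {(3,1),(3,2)}" unfolding MonteS_eq by auto
  then show "prior Q 1 = Q (1,2) + Q (1,3)" "prior Q 2 = Q (2,1) + Q (2,3)" "prior Q 3 = Q (3,1) + Q (3,2)"
    unfolding prior_def by simp_all
qed

lemma MinD: "Min {a,b,c::real} = min a (min b c)" by (simp add: min.assoc)

lemma Wbound:
  assumes "mixed MonteS Q" "c \<in> ConieS"
  shows "W Q c \<le> 1 - Min {prior Q 1, prior Q 2, prior Q 3}"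
proof -
  have nn: "Q (1,2) \<ge> 0" "Q (1,3) \<ge> 0" "Q (2,1) \<ge> 0" "Q (2,3) \<ge> 0" "Q (3,1) \<ge> 0" "Q (3,2) \<ge> 0"
    using assms(1) unfolding mixed_def MonteS_eq by auto
  have s: "Q (1,2) + Q (1,3) + Q (2,1) + Q (2,3) + Q (3,1) + Q (3,2) = 1"
    using assms(1) unfolding mixed_def MonteS_eq by simp
  have m: "Min {prior Q 1, prior Q 2, prior Q 3} \<le> prior Q 1" "Min {prior Q 1, prior Q 2, prior Q 3} \<le> prior Q 2" "Min {prior Q 1, prior Q 2, prior Q 3} \<le> prior Q 3"
    by simp_all
  from assms(2) obtain x a b where c: "c = (x,a,b)" "x = 1 \<or> x = 2 \<or> x = 3" "a = Hold \<or> a = Switch" "b = Hold \<or> b = Switch"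
    unfolding ConieS_eq by auto
  have "doors - {1} = {2,3}" "doors - {2} = {1,3}" "doors - {3} = {1,2}"
    unfolding doors_def by auto
  then have M: "Min (doors - {1}) = 2" "Min (doors - {2}) = 1" "Min (doors - {3}) = 1"
    by simp_all
  from c show ?thesis
    unfolding Wval using nn s m unfolding priors
    by (elim disjE; simp add: payoff_def final_def action_def offer_def M; linarith?)
qed

lemma Wss:
  assumes "u \<in> doors" "(\<Sum>m\<in>MonteS. Q m) = 1"
  shows "W Q (u, Switch, Switch) = 1 - prior Q u"
proof -
  have "doors - {1} = {2,3}" "doors - {2} = {1,3}" "doors - {3} = {1,2}"
    unfolding doors_def by auto
  then have M: "Min (doors - {1}) = 2" "Min (doors - {2}) = 1" "Min (doors - {3}) = 1"
    by simp_all
  have s: "Q (1,2) + Q (1,3) + Q (2,1) + Q (2,3) + Q (3,1) + Q (3,2) = 1"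
    using assms(2) unfolding MonteS_eq by simp
  from assms(1) have "u = 1 \<or> u = 2 \<or> u = 3" unfolding doors_def by auto
  then show ?thesis unfolding Wval using s priors(1)[simplified] priors(2,3)
    by (elim disjE; simp add: payoff_def final_def action_def offer_def M priors; linarith?)
qed

theorem mainTheorem5:
  fixes Q :: "monte \<Rightarrow> real" and u :: nat
  assumes "mixed MonteS Q"
    and "u \<in> doors"
    and "prior Q u = Min {prior Q 1, prior Q 2, prior Q 3}"
  shows "bayesian Q (point (u, Switch, Switch)) \<and>
         winprob Q (point (u, Switch, Switch)) = 1 - Min {prior Q 1, prior Q 2, prior Q 3}"
proof -
  have uC: "(u, Switch, Switch) \<in> ConieS" using assms(2) unfolding ConieS_def by simp
  have s1: "(\<Sum>m\<in>MonteS. Q m) = 1" using assms(1) unfolding mixed_def by simp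
  have wp: "winprob Q (point (u, Switch, Switch)) = 1 - Min {prior Q 1, prior Q 2, prior Q 3}"
  proof -
    have "\<And>c. point (u, Switch, Switch) c * W Q c = (if c = (u, Switch, Switch) then W Q c else 0)"
      by (simp add: point_def)
    then have "winprob Q (point (u, Switch, Switch)) = W Q (u, Switch, Switch)"
      unfolding winprob_W using finC uC by (simp add: sum.delta')
    then show ?thesis using Wss[OF assms(2) s1] assms(3) by simp
  qed
  have mp: "mixed ConieS (point (u, Switch, Switch))"
    unfolding mixed_def point_def using finC uC by simp
  have "winprob Q P' \<le> winprob Q (point (u, Switch, Switch))" if "mixed ConieS P'" for P'
  proof -
    have "winprob Q P' \<le> (\<Sum>c\<in>ConieS. P' c * (1 - Min {prior Q 1, prior Q 2, prior Q 3}))"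
      unfolding winprob_W
      by (rule sum_mono, rule mult_left_mono) (use that assms(1) Wbound in \<open>auto simp: mixed_def\<close>)
    also have "\<dots> = 1 - Min {prior Q 1, prior Q 2, prior Q 3}"
      using that by (simp add: mixed_def sum_distrib_right[symmetric])
    finally show ?thesis using wp by simp
  qed
  thus ?thesis using wp mp unfolding bayesian_def by blast
qed

end
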